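(* Let $\gamma=(\mathcal E,\mathcal F,\pi)$ be an EBA context whose failure model satisfies $\mathcal F\subseteq SO(t)$. Then every action protocol $P$ that implements the knowledge-based program $\mathbf P^0$ in $\gamma$ is an EBA decision protocol for $\gamma$. Moreover, in every run of $\mathcal I_{\gamma,P}$ every nonfaulty agent decides by round $t+2$ (i.e. after at most $t+1$ rounds of message exchange), and Validity holds even for faulty agents: if any agent (faulty or not) decides $v$, then $\mathit{init}_j=v$ for some agent $j$.
   Context: Agents and runs. There are $n$ agents $\mathit{Agt}=\{1,\ldots,n\}$; time is $m\in\mathbb N$, and round $m+1$ is the step from time $m$ to time $m+1$. An information-exchange protocol $\mathcal E$ specifies for each agent $i$: a set $L_i$ of local states, a set $I_i\subseteq L_i$ of initial states, a set $A_i$ of actions, a set $M_i$ of messages, a function giving for $s\in L_i$, $a\in A_i$ and each agent $j$ the message $\mu_{ij}(s,a)\in M_i\cup\{\bot\}$ that $i$ sends to $j$ ($\bot$ means no message), and a transition function $\delta_i:L_i\times A_i\times\prod_j(M_j\cup\{\bot\})\to L_i$. A failure pattern is a pair $(\mathcal N,F)$ with $\mathcal N\subseteq\mathit{Agt}$ (the nonfaulty agents) and $F:\mathbb N\times\mathit{Agt}\times\mathit{Agt}\to\{0,1\}$, where $F(m,i,j)=0$ means the message from $i$ to $j$ in round $m+1$ is lost. The sending-omissions failure model $SO(t)$ ($t<n$) is the set of failure patterns with $|\mathit{Agt}\setminus\mathcal N|\le t$ such that $F(m,i,j)=0$ implies $i\notin\mathcal N$. An action protocol $P$ gives each agent $i$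 a map $P_i:L_i\to A_i$. Given $\mathcal E$, a failure model $\mathcal F$ and $P$, each initial global state (a failure pattern $(\mathcal N,F)\in\mathcal F$ and an $s_i\in I_i$ for each $i$) determines a unique run $r$: if $r_i(k)$ is $i$'s local state at time $k$, then $i$ performs $a_i=P_i(r_i(k))$, agent $j$ receives $m'_{ij}=\mu_{ij}(r_i(k),a_i)$ if $F(k,i,j)=1$ and $\bot$ otherwise, and $r_i(k+1)=\delta_i(r_i(k),a_i,(m'_{1i},\ldots,m'_{ni}))$; the failure pattern is fixed in the run and $\mathcal N(r)$ denotes its nonfaulty set. $\mathcal R_{\mathcal E,\mathcal F,P}$ is the set of all such runs. Agent $i$ decides $v$ in round $k$ of $r$ if $P_i(r_i(k-1))=\mathtt{decide}_i(v)$. An interpreted system $\mathcal I=(\mathcal R,\pi)$ is a set of runs with an interpretation $\pi$ of primitive propositions at points $(r,m)$. $\mathcal I,(r,m)\models K_i\varphi$ iff $\varphi$ holds at all points $(r',m')$ of $\mathcal I$ with $r'_i(m')=r_i(m)$; $\bigcirc\varphi$ holds at $(r,m)$ iff $\varphi$ holds at $(r,m+1)$; $\ominus\varphi$ holds at $(r,m)$ iff $m>0$ and $\varphi$ holds at $(r,m-1)$; $\mathcal I\models\varphi$ means $\varphi$ holds at all points. EBA contexts. An EBA context is a tuple $\gamma=(\mathcal E,\mathcal F,\pi)$ such that: each $A_i=\{\mathtt{decide}_i(0),\mathtt{decide}_i(1),\mathtt{noop}\}$; local states have the form $\langle \mathit{time}_i,\mathit{init}_i,\mathit{decided}_i,\mathit{rd}_i,\ldots\rangle$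 with $\mathit{time}_i\in\mathbb N$, $\mathit{init}_i\in\{0,1\}$ (initial preference), $\mathit{decided}_i,\mathit{rd}_i\in\{0,1,\bot\}$; initial states have the form $\langle 0,\mathit{init}_i,\bot,\bot,\ldots\rangle$; there are pairwise disjoint sets $M^0,M^1,M^2$ with $\bot\notin M^0\cup M^1$ such that an agent performing $\mathtt{decide}_i(0)$ (resp. $\mathtt{decide}_i(1)$, resp. $\mathtt{noop}$) sends every agent a message in $M^0$ (resp. $M^1$, resp. $M^2$); $\delta_i$ increments $\mathit{time}_i$, sets $\mathit{decided}_i:=v$ if the action is $\mathtt{decide}_i(v)$ (otherwise leaves it unchanged), and sets $\mathit{rd}_i$ to $0$ (resp. $1$) if in that round $i$ received a message from an agent performing $\mathtt{decide}(0)$ (resp. $\mathtt{decide}(1)$), and to $\bot$ otherwise; $\pi$ interprets $\mathit{init}_i=v$, $\mathit{decided}_i=v$, $\mathit{time}_i=k$ by reading $i$'s local state, and $i\in\mathcal N$ as true at $(r,m)$ iff $i\in\mathcal N(r)$. Abbreviations: $\mathit{jdecided}_i=v$ is $\mathit{decided}_i=v\wedge\ominus(\mathit{decided}_i=\bot)$; $\mathit{deciding}_i=v$ is $\mathit{decided}_i=\bot\wedge\bigcirc(\mathit{decided}_i=v)$; $\exists v$ is $\bigvee_j \mathit{init}_j=v$. For an action protocol $P$, $\mathcal I_{\gamma,P}=(\mathcal R_{\mathcal E,\mathcal F,P},\pi)$. $P$ is an EBA decision protocol for $\gamma$ if in every run of $\mathcal I_{\gamma,P}$: (Unique Decision) no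 agent decides $v$ and later decides $1-v$; (Agreement) no two nonfaulty agents decide different values; (Validity) if a nonfaulty agent decides $v$ then $\mathit{init}_j=v$ for some $j$; (Termination) every nonfaulty agent eventually decides. Knowledge-based programs. A knowledge-based program $\mathbf P=(\mathbf P_1,\ldots,\mathbf P_n)$ has each $\mathbf P_i$ generated by $\mathbf P_i::=a\mid\text{if }\varphi\text{ then }\mathbf P_i\text{ else }\mathbf P_i$ with $a\in A_i$ and each test $\varphi$ a Boolean combination of formulas $K_i\psi$ and propositions determined by $i$'s local state; its truth at a point depends only on $i$'s local state. Given $\mathcal I$ and a local state $s$ of $i$, $\mathbf P_i^{\mathcal I}(s)$ is the action obtained by evaluating the tests at $s$ in $\mathcal I$. An action protocol $P$ implements $\mathbf P$ in $\gamma$ if $P_i(s)=\mathbf P_i^{\mathcal I}(s)$ for every $i$ and every local state $s$ of $i$ arising in $\mathcal I=\mathcal I_{\gamma,P}$. The program $\mathbf P^0$: for each agent $i$, $\mathbf P^0_i$ is: if $\mathit{decided}_i\neq\bot$ then $\mathtt{noop}$; else if $\mathit{init}_i=0\vee K_i(\bigvee_{j\in\mathit{Agt}}\mathit{jdecided}_j=0)$ then $\mathtt{decide}_i(0)$; else if $K_i(\bigwedge_{j\in\mathit{Agt}}\neg(\mathit{deciding}_j=0))$ then $\mathtt{decide}_i(1)$; else $\mathtt{noop}$. *)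

theory Defs
  imports Main
begin

type_synonym agent = nat

definition Agt :: "nat \<Rightarrow> agent set" where
  "Agt n = {1..n}"

datatype bval = V0 | V1

datatype act = Decide bval | Noop

text \<open>A failure pattern (N, F): N is the set of nonfaulty agents; F m i j = False
  means the message from i to j in round m+1 is lost.\<close>
type_synonym fpattern = "agent set \<times> (nat \<Rightarrow> agent \<Rightarrow> agent \<Rightarrow> bool)"

definition SO :: "nat \<Rightarrow> nat \<Rightarrow> fpattern set" where
  "SO n t = {(N, F). N \<subseteq> Agt n \<and> card (Agt n - N) \<le> t
                     \<and> (\<forall>m i j. \<not> F m i j \<longrightarrow> i \<notin> N)}"

text \<open>Local states of all agents live in one type 's (with L_i = the whole type);
  messages in 'm, with None playing the role of bot.\<close>
record ('s, 'm) eba_ctx =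
  Init      :: "agent \<Rightarrow> 's set"
  Msg       :: "agent \<Rightarrow> agent \<Rightarrow> 's \<Rightarrow> act \<Rightarrow> 'm option"
  Trans     :: "agent \<Rightarrow> 's \<Rightarrow> act \<Rightarrow> (agent \<Rightarrow> 'm option) \<Rightarrow> 's"
  ltime     :: "'s \<Rightarrow> nat"
  linit     :: "'s \<Rightarrow> bval"
  ldecided  :: "'s \<Rightarrow> bval option"
  lrd       :: "'s \<Rightarrow> bval option"
  FM        :: "fpattern set"

definition is_eba_ctx :: "nat \<Rightarrow> ('s, 'm) eba_ctx \<Rightarrow> bool" where
  "is_eba_ctx n C \<longleftrightarrow>
     (\<exists>(M0 :: 'm set) (M1 :: 'm set) (M2 :: 'm option set).
        Some ` M0 \<inter> Some ` M1 = {} \<and> Some ` M0 \<inter> M2 = {} \<and> Some ` M1 \<inter> M2 = {} \<and>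
        (\<forall>i\<in>Agt n. \<forall>s\<in>Init C i. ltime C s = 0 \<and> ldecided C s = None \<and> lrd C s = None) \<and>
        (\<forall>i\<in>Agt n. \<forall>j\<in>Agt n. \<forall>s.
            Msg C i j s (Decide V0) \<in> Some ` M0 \<and>
            Msg C i j s (Decide V1) \<in> Some ` M1 \<and>
            Msg C i j s Noop \<in> M2) \<and>
        (\<forall>i\<in>Agt n. \<forall>s a ms.
            ltime C (Trans C i s a ms) = Suc (ltime C s) \<and>
            linit C (Trans C i s a ms) = linit C s \<and>
            ldecided C (Trans C i s a ms) =
              (case a of Decide v \<Rightarrow> Some v | Noop \<Rightarrow> ldecided C s) \<and>
            ((\<exists>j\<in>Agt n. ms j \<in> Some ` M0) \<and> \<not> (\<exists>j\<in>Agt n. ms j \<in> Some ` M1)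
               \<longrightarrow> lrd C (Trans C i s a ms) = Some V0) \<and>
            ((\<exists>j\<in>Agt n. ms j \<in> Some ` M1) \<and> \<not> (\<exists>j\<in>Agt n. ms j \<in> Some ` M0)
               \<longrightarrow> lrd C (Trans C i s a ms) = Some V1) \<and>
            (\<not> (\<exists>j\<in>Agt n. ms j \<in> Some ` M0) \<and> \<not> (\<exists>j\<in>Agt n. ms j \<in> Some ` M1)
               \<longrightarrow> lrd C (Trans C i s a ms) = None)))"

primrec gst :: "nat \<Rightarrow> ('s, 'm) eba_ctx \<Rightarrow> (agent \<Rightarrow> 's \<Rightarrow> act) \<Rightarrow> fpattern
                 \<Rightarrow> (agent \<Rightarrow> 's) \<Rightarrow> nat \<Rightarrow> agent \<Rightarrow> 's" where
  "gst n C P fp s0 0 = s0"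
| "gst n C P fp s0 (Suc k) =
     (\<lambda>i. Trans C i (gst n C P fp s0 k i) (P i (gst n C P fp s0 k i))
           (\<lambda>j. if j \<in> Agt n \<and> snd fp k j i
                then Msg C j i (gst n C P fp s0 k j) (P j (gst n C P fp s0 k j))
                else None))"

type_synonym 's run = "fpattern \<times> (nat \<Rightarrow> agent \<Rightarrow> 's)"

definition runs :: "nat \<Rightarrow> ('s, 'm) eba_ctx \<Rightarrow> (agent \<Rightarrow> 's \<Rightarrow> act) \<Rightarrow> 's run set" where
  "runs n C P = {(fp, gst n C P fp s0) | fp s0.
                   fp \<in> FM C \<and> (\<forall>i\<in>Agt n. s0 i \<in> Init C i)}"

definition loc :: "'s run \<Rightarrow> agent \<Rightarrow> nat \<Rightarrow> 's" where
  "loc r i m = snd r m i"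

definition nonfaulty :: "'s run \<Rightarrow> agent set" where
  "nonfaulty r = fst (fst r)"

definition Kn :: "'s run set \<Rightarrow> agent \<Rightarrow> ('s run \<Rightarrow> nat \<Rightarrow> bool) \<Rightarrow> 's \<Rightarrow> bool" where
  "Kn R i \<phi> s \<longleftrightarrow> (\<forall>r'\<in>R. \<forall>m'. loc r' i m' = s \<longrightarrow> \<phi> r' m')"

definition jdecided :: "('s, 'm) eba_ctx \<Rightarrow> agent \<Rightarrow> bval \<Rightarrow> 's run \<Rightarrow> nat \<Rightarrow> bool" where
  "jdecided C j v r m \<longleftrightarrow>
     ldecided C (loc r j m) = Some v \<and> m > 0 \<and> ldecided C (loc r j (m - 1)) = None"

definition deciding :: "('s, 'm) eba_ctx \<Rightarrow> agent \<Rightarrow> bval \<Rightarrow> 's run \<Rightarrow> nat \<Rightarrow> bool" where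
  "deciding C j v r m \<longleftrightarrow>
     ldecided C (loc r j m) = None \<and> ldecided C (loc r j (Suc m)) = Some v"

definition P0 :: "nat \<Rightarrow> ('s, 'm) eba_ctx \<Rightarrow> 's run set \<Rightarrow> agent \<Rightarrow> 's \<Rightarrow> act" where
  "P0 n C R i s =
     (if ldecided C s \<noteq> None then Noop
      else if linit C s = V0 \<or> Kn R i (\<lambda>r m. \<exists>j\<in>Agt n. jdecided C j V0 r m) s
        then Decide V0
      else if Kn R i (\<lambda>r m. \<forall>j\<in>Agt n. \<not> deciding C j V0 r m) s
        then Decide V1
      else Noop)"

definition implements :: "nat \<Rightarrow> ('s, 'm) eba_ctx \<Rightarrow> (agent \<Rightarrow> 's \<Rightarrow> act) \<Rightarrow> bool" where
  "implements n C P \<longleftrightarrow>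
     (\<forall>i\<in>Agt n. \<forall>r\<in>runs n C P. \<forall>m.
        P i (loc r i m) = P0 n C (runs n C P) i (loc r i m))"

definition decides :: "(agent \<Rightarrow> 's \<Rightarrow> act) \<Rightarrow> 's run \<Rightarrow> agent \<Rightarrow> bval \<Rightarrow> nat \<Rightarrow> bool" where
  "decides P r i v k \<longleftrightarrow> k \<ge> 1 \<and> P i (loc r i (k - 1)) = Decide v"

definition is_EBA_protocol :: "nat \<Rightarrow> ('s, 'm) eba_ctx \<Rightarrow> (agent \<Rightarrow> 's \<Rightarrow> act) \<Rightarrow> bool" where
  "is_EBA_protocol n C P \<longleftrightarrow>
     (\<forall>r\<in>runs n C P.
        (\<forall>i\<in>Agt n. \<forall>v w k k'. decides P r i v k \<and> decides P r i w k' \<and> k < k' \<longrightarrow> w = v) \<and>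
        (\<forall>i\<in>Agt n \<inter> nonfaulty r. \<forall>j\<in>Agt n \<inter> nonfaulty r. \<forall>v w k k'.
            decides P r i v k \<and> decides P r j w k' \<longrightarrow> v = w) \<and>
        (\<forall>i\<in>Agt n \<inter> nonfaulty r. \<forall>v k.
            decides P r i v k \<longrightarrow> (\<exists>j\<in>Agt n. linit C (loc r j 0) = v)) \<and>
        (\<forall>i\<in>Agt n \<inter> nonfaulty r. \<exists>k v. decides P r i v k))"

end

theory Submission
  imports Defs
begin

definition rcv :: "nat \<Rightarrow> ('s,'m) eba_ctx \<Rightarrow> (agent \<Rightarrow> 's \<Rightarrow> act) \<Rightarrow> 's run \<Rightarrow> nat \<Rightarrow> agent \<Rightarrow> agent \<Rightarrow> 'm option" where
 "rcv n C P r m i = (\<lambda>j. if j \<in> Agt n \<and> snd (fst r) m j i then Msg C j i (loc r j m) (P j (loc r j m)) else None)"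

locale ebaL =
  fixes n t :: nat and C :: "('s,'m) eba_ctx" and P :: "agent \<Rightarrow> 's \<Rightarrow> act"
    and M0 M1 :: "'m set" and M2 :: "'m option set"
  assumes ctx: "Some ` M0 \<inter> Some ` M1 = {} \<and> Some ` M0 \<inter> M2 = {} \<and> Some ` M1 \<inter> M2 = {} \<and>
        (\<forall>i\<in>Agt n. \<forall>s\<in>Init C i. ltime C s = 0 \<and> ldecided C s = None \<and> lrd C s = None) \<and>
        (\<forall>i\<in>Agt n. \<forall>j\<in>Agt n. \<forall>s.
            Msg C i j s (Decide V0) \<in> Some ` M0 \<and>
            Msg C i j s (Decide V1) \<in> Some ` M1 \<and>
            Msg C i j s Noop \<in> M2) \<and>
        (\<forall>i\<in>Agt n. \<forall>s a ms.
            ltime C (Trans C i s a ms) = Suc (ltime C s) \<and>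
            linit C (Trans C i s a ms) = linit C s \<and>
            ldecided C (Trans C i s a ms) =
              (case a of Decide v \<Rightarrow> Some v | Noop \<Rightarrow> ldecided C s) \<and>
            ((\<exists>j\<in>Agt n. ms j \<in> Some ` M0) \<and> \<not> (\<exists>j\<in>Agt n. ms j \<in> Some ` M1)
               \<longrightarrow> lrd C (Trans C i s a ms) = Some V0) \<and>
            ((\<exists>j\<in>Agt n. ms j \<in> Some ` M1) \<and> \<not> (\<exists>j\<in>Agt n. ms j \<in> Some ` M0)
               \<longrightarrow> lrd C (Trans C i s a ms) = Some V1) \<and>
            (\<not> (\<exists>j\<in>Agt n. ms j \<in> Some ` M0) \<and> \<not> (\<exists>j\<in>Agt n. ms j \<in> Some ` M1)
               \<longrightarrow> lrd C (Trans C i s a ms) = None))"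
  and fm: "FM C \<subseteq> SO n t" and impl: "implements n C P"
begin

lemma d01: "Some ` M0 \<inter> Some ` M1 = {}" using ctx by (rule conjunct1)
lemma d02: "Some ` M0 \<inter> M2 = {}" using ctx[THEN conjunct2] by (rule conjunct1)
lemma d12: "Some ` M1 \<inter> M2 = {}" using ctx[THEN conjunct2, THEN conjunct2] by (rule conjunct1)
lemma ini: "\<forall>i\<in>Agt n. \<forall>s\<in>Init C i. ltime C s = 0 \<and> ldecided C s = None \<and> lrd C s = None"
  using ctx[THEN conjunct2, THEN conjunct2, THEN conjunct2] by (rule conjunct1)
lemma msg: "\<forall>i\<in>Agt n. \<forall>j\<in>Agt n. \<forall>s.
            Msg C i j s (Decide V0) \<in> Some ` M0 \<and>
            Msg C i j s (Decide V1) \<in> Some ` M1 \<and>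
            Msg C i j s Noop \<in> M2"
  using ctx[THEN conjunct2, THEN conjunct2, THEN conjunct2, THEN conjunct2] by (rule conjunct1)
lemma tr: "\<forall>i\<in>Agt n. \<forall>s a ms.
            ltime C (Trans C i s a ms) = Suc (ltime C s) \<and>
            linit C (Trans C i s a ms) = linit C s \<and>
            ldecided C (Trans C i s a ms) =
              (case a of Decide v \<Rightarrow> Some v | Noop \<Rightarrow> ldecided C s) \<and>
            ((\<exists>j\<in>Agt n. ms j \<in> Some ` M0) \<and> \<not> (\<exists>j\<in>Agt n. ms j \<in> Some ` M1)
               \<longrightarrow> lrd C (Trans C i s a ms) = Some V0) \<and>
            ((\<exists>j\<in>Agt n. ms j \<in> Some ` M1) \<and> \<not> (\<exists>j\<in>Agt n. ms j \<in> Some ` M0)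
               \<longrightarrow> lrd C (Trans C i s a ms) = Some V1) \<and>
            (\<not> (\<exists>j\<in>Agt n. ms j \<in> Some ` M0) \<and> \<not> (\<exists>j\<in>Agt n. ms j \<in> Some ` M1)
               \<longrightarrow> lrd C (Trans C i s a ms) = None)"
  using ctx[THEN conjunct2, THEN conjunct2, THEN conjunct2, THEN conjunct2] by (rule conjunct2)

abbreviation "R \<equiv> runs n C P"

lemma run_cases:
  assumes "r \<in> R"
  obtains fp s0 where "r = (fp, gst n C P fp s0)" "fp \<in> FM C" "\<forall>i\<in>Agt n. s0 i \<in> Init C i"
  using assms unfolding runs_def by blast

lemma loc_Suc: "r \<in> R \<Longrightarrow> loc r i (Suc m) = Trans C i (loc r i m) (P i (loc r i m)) (rcv n C P r m i)"
proof -
  assume "r \<in> R"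
  then obtain fp s0 where "r = (fp, gst n C P fp s0)" by (rule run_cases)
  then show ?thesis unfolding loc_def rcv_def \<open>r = (fp, gst n C P fp s0)\<close> by (simp cong: if_cong)
qed

lemma loc0: "r \<in> R \<Longrightarrow> i \<in> Agt n \<Longrightarrow> loc r i 0 \<in> Init C i"
  by (erule run_cases) (simp add: loc_def)

lemma ltime: "r \<in> R \<Longrightarrow> i \<in> Agt n \<Longrightarrow> ltime C (loc r i m) = m"
  by (induction m) (use ini tr loc0 loc_Suc in auto)

lemma linit: "r \<in> R \<Longrightarrow> i \<in> Agt n \<Longrightarrow> linit C (loc r i m) = linit C (loc r i 0)"
  by (induction m) (use tr loc_Suc in auto)

lemma dec0: "r \<in> R \<Longrightarrow> i \<in> Agt n \<Longrightarrow> ldecided C (loc r i 0) = None"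
  using ini loc0 by auto

lemma dec_Suc: "r \<in> R \<Longrightarrow> i \<in> Agt n \<Longrightarrow> ldecided C (loc r i (Suc m)) =
   (case P i (loc r i m) of Decide v \<Rightarrow> Some v | Noop \<Rightarrow> ldecided C (loc r i m))"
  using tr loc_Suc by auto

lemma PP0: "r \<in> R \<Longrightarrow> i \<in> Agt n \<Longrightarrow> P i (loc r i m) = P0 n C R i (loc r i m)"
  using impl unfolding implements_def by blast

lemma dec_None: "r \<in> R \<Longrightarrow> i \<in> Agt n \<Longrightarrow> P i (loc r i m) = Decide v \<Longrightarrow> ldecided C (loc r i m) = None"
  using PP0[of r i m] unfolding P0_def by (auto split: if_splits)

lemma mono_d: "r \<in> R \<Longrightarrow> i \<in> Agt n \<Longrightarrow> ldecided C (loc r i m) \<noteq> None \<Longrightarrow> ldecided C (loc r i (m + d)) \<noteq> None"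
  by (induction d) (auto simp: dec_Suc split: act.splits)

lemma mono: "r \<in> R \<Longrightarrow> i \<in> Agt n \<Longrightarrow> ldecided C (loc r i m) \<noteq> None \<Longrightarrow> m \<le> m' \<Longrightarrow> ldecided C (loc r i m') \<noteq> None"
  using mono_d[of r i m "m' - m"] by simp

lemma unique_lt: "r \<in> R \<Longrightarrow> i \<in> Agt n \<Longrightarrow> P i (loc r i a) = Decide v \<Longrightarrow> P i (loc r i b) = Decide w \<Longrightarrow> a < b \<Longrightarrow> False"
  using mono[of r i "Suc a" b] dec_Suc[of r i a] dec_None[of r i b w] by auto

lemma unique: "r \<in> R \<Longrightarrow> i \<in> Agt n \<Longrightarrow> P i (loc r i a) = Decide v \<Longrightarrow> P i (loc r i b) = Decide w \<Longrightarrow> a = b"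
  using unique_lt[of r i a v b w] unique_lt[of r i b w a v] by (cases a b rule: linorder_cases) auto

lemma rcv_M0: assumes i: "i \<in> Agt n"
  shows "rcv n C P r m i j \<in> Some ` M0 \<longleftrightarrow> (j \<in> Agt n \<and> snd (fst r) m j i \<and> P j (loc r j m) = Decide V0)"
proof (cases "j \<in> Agt n \<and> snd (fst r) m j i")
  case False then show ?thesis unfolding rcv_def by auto
next
  case True
  then have j: "j \<in> Agt n" by simp
  have eq: "rcv n C P r m i j = Msg C j i (loc r j m) (P j (loc r j m))" using True unfolding rcv_def by simp
  have m0: "Msg C j i s (Decide V0) \<in> Some ` M0" for s using msg j i by blast
  have m1: "Msg C j i s (Decide V1) \<in> Some ` M1" for s using msg j i by blast
  have m2: "Msg C j i s Noop \<in> M2" for s using msg j i by blast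
  show ?thesis
  proof (cases "P j (loc r j m)")
    case (Decide v)
    show ?thesis
    proof (cases v)
      case V0
      then show ?thesis using eq m0 m1 d01 True Decide by (simp add: disjoint_iff; blast)
    next
      case V1
      then show ?thesis using eq m0 m1 d01 True Decide by (simp add: disjoint_iff; blast)
    qed
  next
    case Noop
    then show ?thesis using eq m2 d02 True by (simp add: disjoint_iff; blast)
  qed
qed

lemma rcv_M1: assumes i: "i \<in> Agt n"
  shows "rcv n C P r m i j \<in> Some ` M1 \<longleftrightarrow> (j \<in> Agt n \<and> snd (fst r) m j i \<and> P j (loc r j m) = Decide V1)"
proof (cases "j \<in> Agt n \<and> snd (fst r) m j i")
  case False then show ?thesis unfolding rcv_def by auto
next
  case True
  then have j: "j \<in> Agt n" by simp
  have eq: "rcv n C P r m i j = Msg C j i (loc r j m) (P j (loc r j m))" using True unfolding rcv_def by simp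
  have m0: "Msg C j i s (Decide V0) \<in> Some ` M0" for s using msg j i by blast
  have m1: "Msg C j i s (Decide V1) \<in> Some ` M1" for s using msg j i by blast
  have m2: "Msg C j i s Noop \<in> M2" for s using msg j i by blast
  show ?thesis
  proof (cases "P j (loc r j m)")
    case (Decide v)
    show ?thesis
    proof (cases v)
      case V0
      then show ?thesis using eq m0 m1 d01 True Decide by (simp add: disjoint_iff; blast)
    next
      case V1
      then show ?thesis using eq m0 m1 d01 True Decide by (simp add: disjoint_iff; blast)
    qed
  next
    case Noop
    then show ?thesis using eq m2 d12 True by (simp add: disjoint_iff; blast)
  qed
qed


lemma rd_V0: "r \<in> R \<Longrightarrow> i \<in> Agt n \<Longrightarrow> lrd C (loc r i m) = Some V0 \<Longrightarrow> 0 < m \<and> (\<exists>j\<in>Agt n. jdecided C j V0 r m)"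
proof (cases m)
  case 0
  assume "r \<in> R" "i \<in> Agt n" "lrd C (loc r i m) = Some V0"
  then show ?thesis using ini loc0 0 by auto
next
  case (Suc m0)
  assume a: "r \<in> R" "i \<in> Agt n" "lrd C (loc r i m) = Some V0"
  have "\<exists>j\<in>Agt n. rcv n C P r m0 i j \<in> Some ` M0"
  proof (rule ccontr)
    assume h: "\<not> ?thesis"
    show False
    proof (cases "\<exists>j\<in>Agt n. rcv n C P r m0 i j \<in> Some ` M1")
      case True
      then show False using h a tr loc_Suc[of r i m0] Suc by auto
    next
      case False
      then show False using h a tr loc_Suc[of r i m0] Suc by auto
    qed
  qed
  then obtain j where j: "j \<in> Agt n" "P j (loc r j m0) = Decide V0" using rcv_M0 a by blast
  then show ?thesis unfolding jdecided_def using dec_Suc[of r j m0] dec_None[of r j m0] a Suc by auto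
qed

lemma K_rd: "r \<in> R \<Longrightarrow> i \<in> Agt n \<Longrightarrow> lrd C (loc r i m) = Some V0 \<Longrightarrow> ldecided C (loc r i m) = None \<Longrightarrow> P i (loc r i m) = Decide V0"
proof -
  assume a: "r \<in> R" "i \<in> Agt n" "lrd C (loc r i m) = Some V0" "ldecided C (loc r i m) = None"
  have "Kn R i (\<lambda>r m. \<exists>j\<in>Agt n. jdecided C j V0 r m) (loc r i m)"
    unfolding Kn_def using rd_V0 a by metis
  then show ?thesis using PP0[of r i m] a unfolding P0_def by auto
qed

lemma V1_props: "r \<in> R \<Longrightarrow> i \<in> Agt n \<Longrightarrow> P i (loc r i m) = Decide V1 \<Longrightarrow> linit C (loc r i m) = V1 \<and> (\<forall>j\<in>Agt n. \<not> deciding C j V0 r m)"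
proof -
  assume a: "r \<in> R" "i \<in> Agt n" "P i (loc r i m) = Decide V1"
  then have "P0 n C R i (loc r i m) = Decide V1" using PP0 by metis
  then have "linit C (loc r i m) \<noteq> V0" "Kn R i (\<lambda>r m. \<forall>j\<in>Agt n. \<not> deciding C j V0 r m) (loc r i m)"
    unfolding P0_def by (auto split: if_splits)
  then show ?thesis using a(1) unfolding Kn_def by (cases "linit C (loc r i m)") auto
qed

lemma no_V1_V0: "r \<in> R \<Longrightarrow> i \<in> Agt n \<Longrightarrow> P i (loc r i m) = Decide V1 \<Longrightarrow> j \<in> Agt n \<Longrightarrow> P j (loc r j m) = Decide V0 \<Longrightarrow> False"
  using V1_props[of r i m] dec_None[of r j m] dec_Suc[of r j m] unfolding deciding_def by auto

lemma deliver: "r \<in> R \<Longrightarrow> j \<in> nonfaulty r \<Longrightarrow> snd (fst r) m j i"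
proof -
  assume a: "r \<in> R" "j \<in> nonfaulty r"
  have "fst r \<in> SO n t" using a(1) fm by (metis run_cases fst_conv subsetD)
  then obtain N F where "fst r = (N,F)" "\<forall>m i j. \<not> F m i j \<longrightarrow> i \<notin> N" unfolding SO_def by auto
  then show ?thesis using a(2) unfolding nonfaulty_def by auto
qed

lemma rd_recv: "r \<in> R \<Longrightarrow> i \<in> Agt n \<Longrightarrow> j \<in> Agt n \<Longrightarrow> P j (loc r j m) = Decide V0 \<Longrightarrow> snd (fst r) m j i \<Longrightarrow> lrd C (loc r i (Suc m)) = Some V0"
proof -
  assume a: "r \<in> R" "i \<in> Agt n" "j \<in> Agt n" "P j (loc r j m) = Decide V0" "snd (fst r) m j i"
  have 1: "\<exists>j\<in>Agt n. rcv n C P r m i j \<in> Some ` M0" using a rcv_M0 by blast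
  have 2: "\<not> (\<exists>k\<in>Agt n. rcv n C P r m i k \<in> Some ` M1)" using a rcv_M1 no_V1_V0 by blast
  show ?thesis using 1 2 tr a loc_Suc[of r i m] by auto
qed

lemma P0_V0: "P0 n C R i s = Decide V0 \<Longrightarrow> ldecided C s = None \<and> (linit C s = V0 \<or> Kn R i (\<lambda>r m. \<exists>j\<in>Agt n. jdecided C j V0 r m) s)"
  unfolding P0_def by (auto split: if_splits)

lemma chain: "r \<in> R \<Longrightarrow> j \<in> Agt n \<Longrightarrow> P j (loc r j m) = Decide V0 \<Longrightarrow> m' \<le> m \<Longrightarrow> \<exists>k\<in>Agt n. P k (loc r k m') = Decide V0"
proof (induction m arbitrary: j)
  case 0
  then show ?case by auto
next
  case (Suc m0)
  show ?case
  proof (cases "m' = Suc m0")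
    case True then show ?thesis using Suc by auto
  next
    case False
    have "P0 n C R j (loc r j (Suc m0)) = Decide V0" using Suc PP0 by metis
    note h = P0_V0[OF this]
    have "\<exists>k\<in>Agt n. P k (loc r k m0) = Decide V0"
    proof (cases "linit C (loc r j (Suc m0)) = V0")
      case True
      then have "linit C (loc r j 0) = V0" using linit Suc by metis
      then have "P0 n C R j (loc r j 0) = Decide V0" using dec0 Suc unfolding P0_def by auto
      then have "P j (loc r j 0) = Decide V0" using PP0 Suc by metis
      then show ?thesis using unique[of r j 0 V0 "Suc m0" V0] Suc by auto
    next
      case False
      then have "\<exists>k\<in>Agt n. jdecided C k V0 r (Suc m0)" using h Suc(2) unfolding Kn_def by blast
      then obtain k where k: "k \<in> Agt n" "ldecided C (loc r k (Suc m0)) = Some V0" "ldecided C (loc r k m0) = None"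
        unfolding jdecided_def by auto
      then have "P k (loc r k m0) = Decide V0" using dec_Suc[of r k m0] Suc(2)
        by (cases "P k (loc r k m0)") auto
      then show ?thesis using k by blast
    qed
    then show ?thesis using Suc False by (metis le_Suc_eq)
  qed
qed


lemma decided_some: "r \<in> R \<Longrightarrow> i \<in> Agt n \<Longrightarrow> ldecided C (loc r i m) \<noteq> None \<Longrightarrow> \<exists>m0<m. \<exists>v. P i (loc r i m0) = Decide v"
proof (induction m)
  case 0 then show ?case using dec0 by auto
next
  case (Suc m)
  show ?case
  proof (cases "P i (loc r i m)")
    case (Decide v) then show ?thesis by auto
  next
    case Noop then show ?thesis using Suc dec_Suc[of r i m] by (auto simp: less_Suc_eq)
  qed
qed

lemma card_faulty: "r \<in> R \<Longrightarrow> card (Agt n - nonfaulty r) \<le> t"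
proof -
  assume a: "r \<in> R"
  have "fst r \<in> SO n t" using a fm by (metis run_cases fst_conv subsetD)
  then obtain N F where "fst r = (N,F)" "card (Agt n - N) \<le> t" unfolding SO_def by blast
  then show ?thesis unfolding nonfaulty_def by simp
qed

lemma term_bound: "r \<in> R \<Longrightarrow> i \<in> Agt n \<Longrightarrow> \<exists>k\<le>t+2. \<exists>v. decides P r i v k"
proof -
  assume a: "r \<in> R" "i \<in> Agt n"
  show ?thesis
  proof (cases "ldecided C (loc r i (Suc t)) = None")
    case False
    then obtain m0 v where "m0 < Suc t" "P i (loc r i m0) = Decide v" using decided_some a by blast
    then show ?thesis unfolding decides_def by (intro exI[of _ "Suc m0"]) auto
  next
    case True
    show ?thesis
    proof (cases "P i (loc r i (Suc t))")
      case (Decide v)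
      then show ?thesis unfolding decides_def by (intro exI[of _ "Suc (Suc t)"]) auto
    next
      case Noop
      define s where "s = loc r i (Suc t)"
      have "\<not> Kn R i (\<lambda>r m. \<forall>j\<in>Agt n. \<not> deciding C j V0 r m) s"
        using PP0[of r i "Suc t"] Noop True a unfolding P0_def s_def by (auto split: if_splits)
      then obtain r' m' j where r': "r' \<in> R" "loc r' i m' = s" "j \<in> Agt n" "deciding C j V0 r' m'"
        unfolding Kn_def by blast
      have "m' = ltime C (loc r' i m')" using ltime[of r' i m'] r'(1) a(2) by simp
      also have "\<dots> = ltime C s" using r'(2) by simp
      also have "\<dots> = Suc t" using ltime[of r i "Suc t"] a unfolding s_def by simp
      finally have m': "m' = Suc t" .
      have "P j (loc r' j (Suc t)) = Decide V0" using r' m' dec_Suc[of r' j "Suc t"] unfolding deciding_def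
        by (cases "P j (loc r' j (Suc t))") auto
      then have ch: "\<forall>m\<le>t. \<exists>k\<in>Agt n. P k (loc r' k m) = Decide V0" using chain[of r' j "Suc t"] r' by auto
      then have "\<forall>m\<in>{..t}. \<exists>k. k \<in> Agt n \<and> P k (loc r' k m) = Decide V0" by auto
      from bchoice[OF this] obtain f where f0: "\<forall>m\<in>{..t}. f m \<in> Agt n \<and> P (f m) (loc r' (f m) m) = Decide V0" by blast
      then have f: "\<forall>m\<le>t. f m \<in> Agt n \<and> P (f m) (loc r' (f m) m) = Decide V0" by auto
      have inj: "inj_on f {..t}"
      proof (rule inj_onI)
        fix x y assume xy: "x \<in> {..t}" "y \<in> {..t}" "f x = f y"
        have 1: "P (f x) (loc r' (f x) x) = Decide V0" "f x \<in> Agt n" using f0 xy(1) by auto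
        have "P (f y) (loc r' (f y) y) = Decide V0" using f0 xy(2) by auto
        then have 2: "P (f x) (loc r' (f x) y) = Decide V0" using xy(3) by simp
        note 1 2
        then show "x = y" using unique[of r' "f x" x V0 y V0] r'(1) by blast
      qed
      have sN: "ldecided C (loc r' i (Suc t)) = None" using r' m' True s_def by simp
      have sP: "P i (loc r' i (Suc t)) = Noop" using r' m' Noop s_def by simp
      have faulty: "f m \<notin> nonfaulty r'" if m: "m \<le> t" for m
      proof
        assume nf: "f m \<in> nonfaulty r'"
        have rd: "lrd C (loc r' i (Suc m)) = Some V0"
          using rd_recv[of r' i "f m" m] deliver[OF r'(1) nf] f m a r' by auto
        have dn: "ldecided C (loc r' i (Suc m)) = None"
        proof (rule ccontr)
          assume "ldecided C (loc r' i (Suc m)) \<noteq> None"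
          then show False using mono[of r' i "Suc m" "Suc t"] sN m r'(1) a(2) by auto
        qed
        have pd: "P i (loc r' i (Suc m)) = Decide V0" using K_rd[OF r'(1) a(2) rd dn] .
        show False
        proof (cases "m = t")
          case True then show False using pd sP by simp
        next
          case False
          then have "ldecided C (loc r' i (Suc (Suc m))) = Some V0" using dec_Suc[of r' i "Suc m"] pd r'(1) a(2) by simp
          then show False using mono[of r' i "Suc (Suc m)" "Suc t"] sN m False r'(1) a(2) by auto
        qed
      qed
      have sub: "f ` {..t} \<subseteq> Agt n - nonfaulty r'" using f faulty by auto
      have "card (f ` {..t}) = Suc t" using card_image[OF inj] by simp
      moreover have "card (f ` {..t}) \<le> card (Agt n - nonfaulty r')"
        by (rule card_mono[OF _ sub]) (simp add: Agt_def)
      ultimately show ?thesis using card_faulty[OF r'(1)] by simp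
    qed
  qed
qed

lemma agree: "r \<in> R \<Longrightarrow> i \<in> Agt n \<Longrightarrow> j \<in> Agt n \<Longrightarrow> j \<in> nonfaulty r \<Longrightarrow>
   P i (loc r i a) = Decide V1 \<Longrightarrow> P j (loc r j b) = Decide V0 \<Longrightarrow> False"
proof -
  assume h: "r \<in> R" "i \<in> Agt n" "j \<in> Agt n" "j \<in> nonfaulty r" "P i (loc r i a) = Decide V1" "P j (loc r j b) = Decide V0"
  show False
  proof (cases a b rule: linorder_cases)
    case less
    then obtain k where "k \<in> Agt n" "P k (loc r k a) = Decide V0" using chain[of r j b a] h by auto
    then show False using no_V1_V0 h by blast
  next
    case equal then show False using no_V1_V0 h by blast
  next
    case greater
    have rd: "lrd C (loc r i (Suc b)) = Some V0" using rd_recv[of r i j b] deliver[of r j b i] h by auto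
    have "ldecided C (loc r i a) = None" using dec_None h by blast
    then have dn: "ldecided C (loc r i (Suc b)) = None"
    proof (rule contrapos_pp)
      assume "ldecided C (loc r i (Suc b)) \<noteq> None"
      then show "ldecided C (loc r i a) \<noteq> None" using mono[of r i "Suc b" a] greater h by auto
    qed
    have "P i (loc r i (Suc b)) = Decide V0" using K_rd[OF h(1) h(2) rd dn] .
    then show False using unique[of r i "Suc b" V0 a V1] h by auto
  qed
qed

lemma valid: "r \<in> R \<Longrightarrow> i \<in> Agt n \<Longrightarrow> P i (loc r i m) = Decide v \<Longrightarrow> \<exists>j\<in>Agt n. linit C (loc r j 0) = v"
proof (cases v)
  case V0
  assume h: "r \<in> R" "i \<in> Agt n" "P i (loc r i m) = Decide v"
  then obtain k where k: "k \<in> Agt n" "P k (loc r k 0) = Decide V0" using chain[of r i m 0] V0 by auto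
  then have "P0 n C R k (loc r k 0) = Decide V0" using PP0 h by metis
  note pv = P0_V0[OF this]
  have "\<not> Kn R k (\<lambda>r m. \<exists>j\<in>Agt n. jdecided C j V0 r m) (loc r k 0)"
    using h(1) unfolding Kn_def jdecided_def by auto
  then show ?thesis using pv k V0 by auto
next
  case V1
  assume h: "r \<in> R" "i \<in> Agt n" "P i (loc r i m) = Decide v"
  then show ?thesis using V1_props[of r i m] linit[of r i m] V1 by auto
qed

end

theorem mainTheorem1:
  fixes n t :: nat
    and C :: "('s, 'm) eba_ctx"
    and P :: "agent \<Rightarrow> 's \<Rightarrow> act"
  assumes "t < n"
    and "is_eba_ctx n C"
    and "FM C \<subseteq> SO n t"
    and "implements n C P"
  shows "is_EBA_protocol n C P
         \<and> (\<forall>r\<in>runs n C P. \<forall>i\<in>Agt n \<inter> nonfaulty r. \<exists>k\<le>t + 2. \<exists>v. decides P r i v k)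
         \<and> (\<forall>r\<in>runs n C P. \<forall>i\<in>Agt n. \<forall>v k.
               decides P r i v k \<longrightarrow> (\<exists>j\<in>Agt n. linit C (loc r j 0) = v))"
proof -
  obtain M0 M1 :: "'m set" and M2 :: "'m option set" where H: "Some ` M0 \<inter> Some ` M1 = {} \<and> Some ` M0 \<inter> M2 = {} \<and> Some ` M1 \<inter> M2 = {} \<and>
        (\<forall>i\<in>Agt n. \<forall>s\<in>Init C i. ltime C s = 0 \<and> ldecided C s = None \<and> lrd C s = None) \<and>
        (\<forall>i\<in>Agt n. \<forall>j\<in>Agt n. \<forall>s.
            Msg C i j s (Decide V0) \<in> Some ` M0 \<and>
            Msg C i j s (Decide V1) \<in> Some ` M1 \<and>
            Msg C i j s Noop \<in> M2) \<and>
        (\<forall>i\<in>Agt n. \<forall>s a ms.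
            ltime C (Trans C i s a ms) = Suc (ltime C s) \<and>
            linit C (Trans C i s a ms) = linit C s \<and>
            ldecided C (Trans C i s a ms) =
              (case a of Decide v \<Rightarrow> Some v | Noop \<Rightarrow> ldecided C s) \<and>
            ((\<exists>j\<in>Agt n. ms j \<in> Some ` M0) \<and> \<not> (\<exists>j\<in>Agt n. ms j \<in> Some ` M1)
               \<longrightarrow> lrd C (Trans C i s a ms) = Some V0) \<and>
            ((\<exists>j\<in>Agt n. ms j \<in> Some ` M1) \<and> \<not> (\<exists>j\<in>Agt n. ms j \<in> Some ` M0)
               \<longrightarrow> lrd C (Trans C i s a ms) = Some V1) \<and>
            (\<not> (\<exists>j\<in>Agt n. ms j \<in> Some ` M0) \<and> \<not> (\<exists>j\<in>Agt n. ms j \<in> Some ` M1)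
               \<longrightarrow> lrd C (Trans C i s a ms) = None))"
    using assms(2) unfolding is_eba_ctx_def by (elim exE) (erule that)
  interpret E: ebaL n t C P M0 M1 M2 by (intro ebaL.intro H assms(3) assms(4))
  have T: "\<forall>r\<in>runs n C P. \<forall>i\<in>Agt n \<inter> nonfaulty r. \<exists>k\<le>t + 2. \<exists>v. decides P r i v k"
    using E.term_bound by auto
  have V: "\<forall>r\<in>runs n C P. \<forall>i\<in>Agt n. \<forall>v k.
               decides P r i v k \<longrightarrow> (\<exists>j\<in>Agt n. linit C (loc r j 0) = v)"
    unfolding decides_def using E.valid by blast
  have U: "\<forall>r\<in>runs n C P. \<forall>i\<in>Agt n. \<forall>v w k k'. decides P r i v k \<and> decides P r i w k' \<and> k < k' \<longrightarrow> w = v"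
  proof (intro ballI allI impI)
    fix r i v w k k'
    assume h: "r \<in> runs n C P" "i \<in> Agt n" "decides P r i v k \<and> decides P r i w k' \<and> k < k'"
    then have "k - 1 = k' - 1" using E.unique[of r i "k - 1" v "k' - 1" w] unfolding decides_def by auto
    then show "w = v" using h unfolding decides_def by auto
  qed
  have A: "\<forall>r\<in>runs n C P. \<forall>i\<in>Agt n \<inter> nonfaulty r. \<forall>j\<in>Agt n \<inter> nonfaulty r. \<forall>v w k k'.
            decides P r i v k \<and> decides P r j w k' \<longrightarrow> v = w"
  proof (intro ballI allI impI)
    fix r i j v w k k'
    assume h: "r \<in> runs n C P" "i \<in> Agt n \<inter> nonfaulty r" "j \<in> Agt n \<inter> nonfaulty r"
      "decides P r i v k \<and> decides P r j w k'"
    show "v = w"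
    proof (cases v; cases w)
      assume "v = V1" "w = V0"
      then show ?thesis using E.agree[of r i j "k - 1" "k' - 1"] h unfolding decides_def by auto
    next
      assume "v = V0" "w = V1"
      then show ?thesis using E.agree[of r j i "k' - 1" "k - 1"] h unfolding decides_def by auto
    qed auto
  qed
  have "is_EBA_protocol n C P" unfolding is_EBA_protocol_def
    apply (rule ballI)
    subgoal for r
      apply (intro conjI)
      subgoal using U by blast
      subgoal using A by blast
      subgoal using V by blast
      subgoal using T by blast
      done
    done
  then show ?thesis using T V by (intro conjI)
qed

end
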